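(* Let $\mathcal{M}=\{(x,y,z):x^2+y^2=1\}$ be the cylinder in $\mathbb{R}^3$ and let $G\to G'$ be a vertex-to-$K_4$ move. If $G$ is generically infinitesimally rigid on $\mathcal{M}$, then $G'$ is generically infinitesimally rigid on $\mathcal{M}$ (that is, the vertex-to-$K_4$ move on the cylinder preserves generic infinitesimal rigidity).
   Context: Vertex-to-$K_4$ move: replace a vertex $v$ of a simple graph by a copy of $K_4$ on four new vertices, each edge $xv$ being replaced by $xw$ for some arbitrarily chosen vertex $w$ of the $K_4$. For a framework $(G,p)$ on $\mathcal{M}$ ($p=(p_1,\dots,p_n)\in\mathcal{M}^n$), the rigidity matrix $R_{\mathcal{M}}(G,p)$ is the $(|E|+|V|)\times 3|V|$ matrix whose row for edge $v_iv_j$ has $p_i-p_j$ in the column triple of $v_i$ and $p_j-p_i$ in that of $v_j$, and whose row for vertex $v_i$ has the normal $N(p_i)=(2x_i,2y_i,0)$ in the triple of $v_i$; its kernel is the space of infinitesimal flexes. Rigid motion flexes are those induced by infinitesimal isometries of $\mathbb{R}^3$ tangential to $\mathcal{M}$ everywhere; $(G,p)$ is infinitesimally rigid if every infinitesimal flex is a rigid motion flex. $(G,p)$ is generic if any rational-coefficient polynomial in the coordinates vanishing at $p$ lies in the ideal generated by $X_i^2+Y_i^2-1$. A graph is generically infinitesimally rigid on $\mathcal{M}$ if its generic frameworks on $\mathcal{M}$ are infinitesimally rigid. *)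

theory Defs
  imports "HOL-Analysis.Analysis"
begin

definition simple_graph :: "'a set \<Rightarrow> 'a set set \<Rightarrow> bool" where
  "simple_graph V E \<longleftrightarrow> finite V \<and>
     (\<forall>e\<in>E. \<exists>x y. x \<noteq> y \<and> x \<in> V \<and> y \<in> V \<and> e = {x, y})"

definition vertex_to_K4 ::
  "'a set \<Rightarrow> 'a set set \<Rightarrow> 'a set \<Rightarrow> 'a set set \<Rightarrow> bool" where
  "vertex_to_K4 V E V' E' \<longleftrightarrow>
     (\<exists>v w1 w2 w3 w4 c. v \<in> V \<and>
        distinct [w1, w2, w3, w4] \<and> {w1, w2, w3, w4} \<inter> V = {} \<and>
        (\<forall>x. {x, v} \<in> E \<longrightarrow> c x \<in> {w1, w2, w3, w4}) \<and>
        V' = (V - {v}) \<union> {w1, w2, w3, w4} \<and>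
        E' = {e \<in> E. v \<notin> e}
             \<union> {{x, c x} | x. {x, v} \<in> E}
             \<union> {{a, b} | a b. a \<in> {w1, w2, w3, w4} \<and> b \<in> {w1, w2, w3, w4} \<and> a \<noteq> b})"

definition on_cyl :: "real^3 \<Rightarrow> bool" where
  "on_cyl q \<longleftrightarrow> (q $ 1)\<^sup>2 + (q $ 2)\<^sup>2 = 1"

definition cyl_normal :: "real^3 \<Rightarrow> real^3" where
  "cyl_normal q = vector [2 * q $ 1, 2 * q $ 2, 0]"

definition framework_on_cyl :: "'a set \<Rightarrow> ('a \<Rightarrow> real^3) \<Rightarrow> bool" where
  "framework_on_cyl V p \<longleftrightarrow> (\<forall>v\<in>V. on_cyl (p v))"

definition inf_flex :: "'a set \<Rightarrow> 'a set set \<Rightarrow> ('a \<Rightarrow> real^3) \<Rightarrow> ('a \<Rightarrow> real^3) \<Rightarrow> bool" where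
  "inf_flex V E p u \<longleftrightarrow>
     (\<forall>x y. {x, y} \<in> E \<longrightarrow> (p x - p y) \<bullet> (u x - u y) = 0) \<and>
     (\<forall>x\<in>V. cyl_normal (p x) \<bullet> u x = 0)"

definition tangential_inf_isometry :: "real^3^3 \<Rightarrow> real^3 \<Rightarrow> bool" where
  "tangential_inf_isometry A b \<longleftrightarrow> transpose A = - A \<and>
     (\<forall>q. on_cyl q \<longrightarrow> cyl_normal q \<bullet> (A *v q + b) = 0)"

definition rigid_motion_flex :: "'a set \<Rightarrow> ('a \<Rightarrow> real^3) \<Rightarrow> ('a \<Rightarrow> real^3) \<Rightarrow> bool" where
  "rigid_motion_flex V p u \<longleftrightarrow>
     (\<exists>A b. tangential_inf_isometry A b \<and> (\<forall>x\<in>V. u x = A *v p x + b))"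

definition inf_rigid :: "'a set \<Rightarrow> 'a set set \<Rightarrow> ('a \<Rightarrow> real^3) \<Rightarrow> bool" where
  "inf_rigid V E p \<longleftrightarrow> (\<forall>u. inf_flex V E p u \<longrightarrow> rigid_motion_flex V p u)"

datatype 'v rpoly = Var 'v | Const rat | Add "'v rpoly" "'v rpoly" | Mul "'v rpoly" "'v rpoly"

fun rpoly_vars :: "'v rpoly \<Rightarrow> 'v set" where
  "rpoly_vars (Var x) = {x}"
| "rpoly_vars (Const c) = {}"
| "rpoly_vars (Add f g) = rpoly_vars f \<union> rpoly_vars g"
| "rpoly_vars (Mul f g) = rpoly_vars f \<union> rpoly_vars g"

fun rpoly_eval :: "'v rpoly \<Rightarrow> ('v \<Rightarrow> real) \<Rightarrow> real" where
  "rpoly_eval (Var x) env = env x"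
| "rpoly_eval (Const c) env = of_rat c"
| "rpoly_eval (Add f g) env = rpoly_eval f env + rpoly_eval g env"
| "rpoly_eval (Mul f g) env = rpoly_eval f env * rpoly_eval g env"

definition coords :: "('a \<Rightarrow> real^3) \<Rightarrow> ('a \<times> 3 \<Rightarrow> real)" where
  "coords p = (\<lambda>(v, k). p v $ k)"

text \<open>Membership of f in the ideal of Q[X_v,Y_v,Z_v : v \<in> V] generated by X_v^2+Y_v^2-1.
  Polynomial identity over Q is identity of polynomial functions on R^{3|V|}.\<close>
definition in_cyl_ideal :: "'a set \<Rightarrow> ('a \<times> 3) rpoly \<Rightarrow> bool" where
  "in_cyl_ideal V f \<longleftrightarrow>
     (\<exists>h :: 'a \<Rightarrow> ('a \<times> 3) rpoly. (\<forall>v\<in>V. rpoly_vars (h v) \<subseteq> V \<times> UNIV) \<and>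
        (\<forall>env. rpoly_eval f env =
                 (\<Sum>v\<in>V. rpoly_eval (h v) env * ((env (v, 1))\<^sup>2 + (env (v, 2))\<^sup>2 - 1))))"

definition generic_cyl :: "'a set \<Rightarrow> ('a \<Rightarrow> real^3) \<Rightarrow> bool" where
  "generic_cyl V p \<longleftrightarrow> framework_on_cyl V p \<and>
     (\<forall>f. rpoly_vars f \<subseteq> V \<times> UNIV \<longrightarrow> rpoly_eval f (coords p) = 0 \<longrightarrow> in_cyl_ideal V f)"

definition gen_inf_rigid_cyl :: "'a set \<Rightarrow> 'a set set \<Rightarrow> bool" where
  "gen_inf_rigid_cyl V E \<longleftrightarrow> (\<forall>p. generic_cyl V p \<longrightarrow> inf_rigid V E p)"

end

theory Submission
  imports Defs "Jordan_Normal_Form.Determinant"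
begin

definition polyfun :: "'v set \<Rightarrow> (('v \<Rightarrow> real) \<Rightarrow> real) \<Rightarrow> bool" where
  "polyfun W F \<longleftrightarrow> (\<exists>f. rpoly_vars f \<subseteq> W \<and> (\<forall>env. rpoly_eval f env = F env))"

lemma polyfun_const: "polyfun W (\<lambda>_. of_rat c)"
  unfolding polyfun_def by (rule exI[of _ "Const c"]) auto

lemma polyfun_int: "polyfun W (\<lambda>_. of_int k)"
  using polyfun_const[of W "of_int k"] by simp

lemma polyfun_zero: "polyfun W (\<lambda>_. 0)"
  using polyfun_int[of W 0] by simp

lemma polyfun_var: "x \<in> W \<Longrightarrow> polyfun W (\<lambda>e. e x)"
  unfolding polyfun_def by (rule exI[of _ "Var x"]) auto

lemma polyfun_add: "polyfun W F \<Longrightarrow> polyfun W G \<Longrightarrow> polyfun W (\<lambda>e. F e + G e)"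
  unfolding polyfun_def by (metis (no_types, lifting) Un_least rpoly_eval.simps(3) rpoly_vars.simps(3))

lemma polyfun_mult: "polyfun W F \<Longrightarrow> polyfun W G \<Longrightarrow> polyfun W (\<lambda>e. F e * G e)"
  unfolding polyfun_def by (metis (no_types, lifting) Un_least rpoly_eval.simps(4) rpoly_vars.simps(4))

lemma polyfun_uminus: "polyfun W F \<Longrightarrow> polyfun W (\<lambda>e. - F e)"
  using polyfun_mult[OF polyfun_int[of W "-1"]] by simp

lemma polyfun_diff: "polyfun W F \<Longrightarrow> polyfun W G \<Longrightarrow> polyfun W (\<lambda>e. F e - G e)"
  using polyfun_add[OF _ polyfun_uminus] by simp

lemma polyfun_sum: "finite S \<Longrightarrow> (\<And>s. s \<in> S \<Longrightarrow> polyfun W (F s)) \<Longrightarrow> polyfun W (\<lambda>e. \<Sum>s\<in>S. F s e)"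
proof (induction S rule: finite_induct)
  case empty then show ?case using polyfun_zero by simp
next
  case (insert x F) then show ?case by (simp add: polyfun_add)
qed

lemma polyfun_prod: "finite S \<Longrightarrow> (\<And>s. s \<in> S \<Longrightarrow> polyfun W (F s)) \<Longrightarrow> polyfun W (\<lambda>e. \<Prod>s\<in>S. F s e)"
proof (induction S rule: finite_induct)
  case empty then show ?case using polyfun_int[of W 1] by simp
next
  case (insert x F) then show ?case by (simp add: polyfun_mult)
qed

lemma polyfun_sum_list: "(\<And>s. s \<in> set xs \<Longrightarrow> polyfun W (F s)) \<Longrightarrow> polyfun W (\<lambda>e. \<Sum>s\<leftarrow>xs. F s e)"
  by (induction xs) (auto simp: polyfun_zero polyfun_add)

lemma generic_nonzero:
  assumes gen: "generic_cyl V p" and pf: "polyfun (V \<times> UNIV) F"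
    and q: "framework_on_cyl V q" and nz: "F (coords q) \<noteq> 0"
  shows "F (coords p) \<noteq> 0"
proof
  assume z: "F (coords p) = 0"
  obtain f where f: "rpoly_vars f \<subseteq> V \<times> UNIV" "\<And>env. rpoly_eval f env = F env"
    using pf unfolding polyfun_def by blast
  have "in_cyl_ideal V f" using gen f z unfolding generic_cyl_def by auto
  then obtain h where h: "\<And>env. rpoly_eval f env =
          (\<Sum>v\<in>V. rpoly_eval (h v) env * ((env (v, 1))\<^sup>2 + (env (v, 2))\<^sup>2 - 1))"
    unfolding in_cyl_ideal_def by blast
  have "\<And>v. v \<in> V \<Longrightarrow> (coords q (v, 1))\<^sup>2 + (coords q (v, 2))\<^sup>2 - 1 = 0"
    using q by (simp add: framework_on_cyl_def on_cyl_def coords_def)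
  then have "rpoly_eval f (coords q) = 0" unfolding h by simp
  then show False using nz f by simp
qed

type_synonym 'a rowt = "('a \<times> (('a \<times> 3 \<Rightarrow> real) \<Rightarrow> real^3)) list"

definition rowval :: "'a rowt \<Rightarrow> ('a \<times> 3 \<Rightarrow> real) \<Rightarrow> ('a \<Rightarrow> real^3) \<Rightarrow> real" where
  "rowval \<rho> e u = (\<Sum>(a,d)\<leftarrow>\<rho>. inner (d e) (u a))"

definition rcoef :: "'a rowt \<Rightarrow> ('a \<times> 3 \<Rightarrow> real) \<Rightarrow> 'a \<times> 3 \<Rightarrow> real" where
  "rcoef \<rho> e i = (\<Sum>(a,d)\<leftarrow>\<rho>. if a = fst i then vec_nth (d e) (snd i) else 0)"

lemma sum_single_vertex:
  assumes "finite W" "a \<in> W"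
  shows "(\<Sum>i\<in>W \<times> UNIV. (if a = fst i then vec_nth (x::real^3) (snd i) else 0) * vec_nth (u (fst i)) (snd i))
         = inner x (u a)"
proof -
  have "(\<Sum>i\<in>W \<times> UNIV. (if a = fst i then vec_nth x (snd i) else 0) * vec_nth (u (fst i)) (snd i))
     = (\<Sum>w\<in>W. \<Sum>k\<in>UNIV. (if a = w then vec_nth x k else 0) * vec_nth (u w) k)"
    by (simp add: sum.cartesian_product split_def)
  also have "\<dots> = (\<Sum>w\<in>W. if a = w then (\<Sum>k\<in>UNIV. vec_nth x k * vec_nth (u w) k) else 0)"
    by (rule sum.cong) auto
  also have "\<dots> = (\<Sum>k\<in>UNIV. vec_nth x k * vec_nth (u a) k)"
    using assms by (simp add: sum.delta)
  finally show ?thesis by (simp add: inner_vec_def)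
qed

lemma rowval_coef:
  assumes "finite W" "fst ` set \<rho> \<subseteq> W"
  shows "rowval \<rho> e u = (\<Sum>i\<in>W \<times> UNIV. rcoef \<rho> e i * vec_nth (u (fst i)) (snd i))"
  using assms(2)
proof (induction \<rho>)
  case Nil then show ?case by (simp add: rowval_def rcoef_def)
next
  case (Cons ad \<rho>)
  obtain a d where ad: "ad = (a, d)" by force
  have aW: "a \<in> W" using Cons.prems ad by auto
  have IH: "rowval \<rho> e u = (\<Sum>i\<in>W \<times> UNIV. rcoef \<rho> e i * vec_nth (u (fst i)) (snd i))"
    using Cons by auto
  have "rowval (ad # \<rho>) e u = inner (d e) (u a) + rowval \<rho> e u"
    by (simp add: rowval_def ad)
  moreover have "\<And>i. rcoef (ad # \<rho>) e i = (if a = fst i then vec_nth (d e) (snd i) else 0) + rcoef \<rho> e i"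
    by (simp add: rcoef_def ad)
  ultimately show ?case
    using IH sum_single_vertex[OF assms(1) aW, of "d e" u]
    by (simp add: distrib_right sum.distrib)
qed

definition Gm :: "'a rowt set \<Rightarrow> (nat \<Rightarrow> 'a \<times> 3) \<Rightarrow> nat \<Rightarrow> ('a \<times> 3 \<Rightarrow> real) \<Rightarrow> real mat" where
  "Gm R e n env = mat n n (\<lambda>(i,j). \<Sum>\<rho>\<in>R. rcoef \<rho> env (e i) * rcoef \<rho> env (e j))"

lemma Gm_carrier: "Gm R e n env \<in> carrier_mat n n"
  by (simp add: Gm_def)

lemma Gm_mult:
  assumes "finite R" "i < n" "dim_vec x = n"
  shows "vec_index (Gm R e n env *\<^sub>v x) i =
     (\<Sum>\<rho>\<in>R. rcoef \<rho> env (e i) * (\<Sum>j\<in>{0..<n}. rcoef \<rho> env (e j) * vec_index x j))"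
proof -
  have "vec_index (Gm R e n env *\<^sub>v x) i =
     (\<Sum>j\<in>{0..<n}. (\<Sum>\<rho>\<in>R. rcoef \<rho> env (e i) * rcoef \<rho> env (e j)) * vec_index x j)"
    using assms by (simp add: Gm_def scalar_prod_def)
  also have "\<dots> = (\<Sum>j\<in>{0..<n}. \<Sum>\<rho>\<in>R. rcoef \<rho> env (e i) * (rcoef \<rho> env (e j) * vec_index x j))"
    by (simp add: sum_distrib_right mult.assoc)
  also have "\<dots> = (\<Sum>\<rho>\<in>R. \<Sum>j\<in>{0..<n}. rcoef \<rho> env (e i) * (rcoef \<rho> env (e j) * vec_index x j))"
    by (rule sum.swap)
  also have "\<dots> = (\<Sum>\<rho>\<in>R. rcoef \<rho> env (e i) * (\<Sum>j\<in>{0..<n}. rcoef \<rho> env (e j) * vec_index x j))"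
    by (simp add: sum_distrib_left)
  finally show ?thesis .
qed

lemma kernel_iff:
  assumes W: "finite W" and R: "finite R" and RW: "\<forall>\<rho>\<in>R. fst ` set \<rho> \<subseteq> W"
    and e: "bij_betw e {0..<n} (W \<times> UNIV)"
  shows "det (Gm R e n env) \<noteq> 0 \<longleftrightarrow> (\<forall>u. (\<forall>\<rho>\<in>R. rowval \<rho> env u = 0) \<longrightarrow> (\<forall>w\<in>W. u w = 0))"
proof -
  have reidx: "\<And>F. (\<Sum>i\<in>W \<times> UNIV. F i) = (\<Sum>j\<in>{0..<n}. F (e j))"
    using sum.reindex_bij_betw[OF e] by (rule sym)
  have rv: "\<And>\<rho> u. \<rho> \<in> R \<Longrightarrow> rowval \<rho> env u = (\<Sum>j\<in>{0..<n}. rcoef \<rho> env (e j) * vec_nth (u (fst (e j))) (snd (e j)))"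
  proof -
    fix \<rho> u assume r: "\<rho> \<in> R"
    have "rowval \<rho> env u = (\<Sum>i\<in>W \<times> UNIV. rcoef \<rho> env i * vec_nth (u (fst i)) (snd i))"
      using rowval_coef[OF W] RW r by blast
    then show "rowval \<rho> env u = (\<Sum>j\<in>{0..<n}. rcoef \<rho> env (e j) * vec_nth (u (fst (e j))) (snd (e j)))"
      by (simp only: reidx)
  qed
  have eW: "\<And>j. j < n \<Longrightarrow> e j \<in> W \<times> UNIV" using bij_betwE[OF e] by simp
  have det0: "det (Gm R e n env) = 0 \<longleftrightarrow> (\<exists>x. x \<in> carrier_vec n \<and> x \<noteq> 0\<^sub>v n \<and> Gm R e n env *\<^sub>v x = 0\<^sub>v n)"
    by (rule det_0_iff_vec_prod_zero[OF Gm_carrier])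
  show ?thesis
  proof
    assume d: "det (Gm R e n env) \<noteq> 0"
    show "\<forall>u. (\<forall>\<rho>\<in>R. rowval \<rho> env u = 0) \<longrightarrow> (\<forall>w\<in>W. u w = 0)"
    proof (intro allI impI ballI, rule ccontr)
      fix u w assume ker: "\<forall>\<rho>\<in>R. rowval \<rho> env u = 0" and w: "w \<in> W" and nz: "u w \<noteq> 0"
      define x where "x = vec n (\<lambda>j. vec_nth (u (fst (e j))) (snd (e j)))"
      have xc: "x \<in> carrier_vec n" by (simp add: x_def)
      have "Gm R e n env *\<^sub>v x = 0\<^sub>v n"
      proof (rule eq_vecI)
        fix i assume i: "i < dim_vec (0\<^sub>v n :: real vec)"
        then have "vec_index (Gm R e n env *\<^sub>v x) i =
          (\<Sum>\<rho>\<in>R. rcoef \<rho> env (e i) * (\<Sum>j\<in>{0..<n}. rcoef \<rho> env (e j) * vec_index x j))"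
          by (intro Gm_mult R) (auto simp: x_def)
        also have "\<dots> = (\<Sum>\<rho>\<in>R. rcoef \<rho> env (e i) * rowval \<rho> env u)"
          by (intro sum.cong refl) (simp add: rv x_def)
        also have "\<dots> = 0" using ker by simp
        finally show "vec_index (Gm R e n env *\<^sub>v x) i = vec_index (0\<^sub>v n) i" using i by simp
      qed (simp add: Gm_def)
      moreover have "x \<noteq> 0\<^sub>v n"
      proof
        assume x0: "x = 0\<^sub>v n"
        obtain k where k: "vec_nth (u w) k \<noteq> 0" using nz Finite_Cartesian_Product.vec_eq_iff[of "u w" 0] by auto
        have "(w, k) \<in> e ` {0..<n}" using e w by (auto simp: bij_betw_def)
        then obtain j where j: "j < n" "e j = (w, k)" by auto
        have "vec_index x j = vec_nth (u w) k" using j by (simp add: x_def)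
        then show False using x0 j k by simp
      qed
      ultimately show False using d det0 xc by blast
    qed
  next
    assume ker: "\<forall>u. (\<forall>\<rho>\<in>R. rowval \<rho> env u = 0) \<longrightarrow> (\<forall>w\<in>W. u w = 0)"
    show "det (Gm R e n env) \<noteq> 0"
    proof
      assume "det (Gm R e n env) = 0"
      then obtain x where xc: "x \<in> carrier_vec n" and xnz: "x \<noteq> 0\<^sub>v n" and gx: "Gm R e n env *\<^sub>v x = 0\<^sub>v n"
        using det0 by blast
      define Y where "Y \<rho> = (\<Sum>j\<in>{0..<n}. rcoef \<rho> env (e j) * vec_index x j)" for \<rho>
      have dx: "dim_vec x = n" using xc by simp
      have "0 = (\<Sum>i\<in>{0..<n}. vec_index x i * vec_index (Gm R e n env *\<^sub>v x) i)"
        using gx by simp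
      also have "\<dots> = (\<Sum>i\<in>{0..<n}. vec_index x i * (\<Sum>\<rho>\<in>R. rcoef \<rho> env (e i) * Y \<rho>))"
        by (intro sum.cong refl) (simp add: Gm_mult[OF R _ dx] Y_def)
      also have "\<dots> = (\<Sum>i\<in>{0..<n}. \<Sum>\<rho>\<in>R. Y \<rho> * (rcoef \<rho> env (e i) * vec_index x i))"
        by (simp add: sum_distrib_left mult_ac)
      also have "\<dots> = (\<Sum>\<rho>\<in>R. \<Sum>i\<in>{0..<n}. Y \<rho> * (rcoef \<rho> env (e i) * vec_index x i))"
        by (rule sum.swap)
      also have "\<dots> = (\<Sum>\<rho>\<in>R. Y \<rho> * Y \<rho>)"
        by (simp add: Y_def sum_distrib_left)
      finally have "(\<Sum>\<rho>\<in>R. Y \<rho> * Y \<rho>) = 0" by simp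
      then have Y0: "\<And>\<rho>. \<rho> \<in> R \<Longrightarrow> Y \<rho> = 0"
        using sum_nonneg_eq_0_iff[OF R, of "\<lambda>\<rho>. Y \<rho> * Y \<rho>"] by auto
      define u where "u w = (\<chi> k. vec_index x (the_inv_into {0..<n} e (w, k)))" for w
      have ue: "\<And>j. j < n \<Longrightarrow> vec_nth (u (fst (e j))) (snd (e j)) = vec_index x j"
        using e unfolding u_def by (simp add: bij_betw_def the_inv_into_f_f)
      have "\<forall>\<rho>\<in>R. rowval \<rho> env u = 0"
      proof
        fix \<rho> assume r: "\<rho> \<in> R"
        have "rowval \<rho> env u = (\<Sum>j\<in>{0..<n}. rcoef \<rho> env (e j) * vec_index x j)"
          unfolding rv[OF r] by (intro sum.cong refl) (simp add: ue)
        then show "rowval \<rho> env u = 0" using Y0[OF r] by (simp add: Y_def)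
      qed
      then have uw: "\<forall>w\<in>W. u w = 0" using ker by blast
      have "x = 0\<^sub>v n"
      proof (rule eq_vecI)
        fix j assume "j < dim_vec (0\<^sub>v n :: real vec)"
        then have j: "j < n" by simp
        have "vec_index x j = vec_nth (u (fst (e j))) (snd (e j))" using ue[OF j] by simp
        also have "\<dots> = 0" using uw eW[OF j] by auto
        finally show "vec_index x j = vec_index (0\<^sub>v n) j" using j by simp
      qed (simp add: dx)
      then show False using xnz by simp
    qed
  qed
qed

lemma polyfun_rcoef:
  assumes "\<forall>(a,d)\<in>set \<rho>. \<forall>k. polyfun W (\<lambda>e. vec_nth (d e) k)"
  shows "polyfun W (\<lambda>e. rcoef \<rho> e i)"
  unfolding rcoef_def
  using assms
proof (induction \<rho>)
  case Nil then show ?case by (simp add: polyfun_zero)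
next
  case (Cons ad \<rho>)
  obtain a d where ad: "ad = (a, d)" by force
  have "polyfun W (\<lambda>e. if a = fst i then vec_nth (d e) (snd i) else 0)"
    using Cons.prems ad by (cases "a = fst i") (auto simp: polyfun_zero)
  moreover have "polyfun W (\<lambda>e. \<Sum>(a,d)\<leftarrow>\<rho>. if a = fst i then vec_nth (d e) (snd i) else 0)"
    using Cons by auto
  ultimately show ?case using polyfun_add by (simp add: ad)
qed

lemma polyfun_det:
  assumes R: "finite R" and pf: "\<forall>\<rho>\<in>R. \<forall>(a,d)\<in>set \<rho>. \<forall>k. polyfun W (\<lambda>e. vec_nth (d e) k)"
  shows "polyfun W (\<lambda>env. det (Gm R e n env))"
proof -
  have eq: "\<And>env. det (Gm R e n env) = (\<Sum>\<pi>\<in>{\<pi>. \<pi> permutes {0..<n}}. signof \<pi> *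
     (\<Prod>i\<in>{0..<n}. (\<Sum>\<rho>\<in>R. rcoef \<rho> env (e i) * rcoef \<rho> env (e (\<pi> i)))))"
  proof -
    fix env
    show "det (Gm R e n env) = (\<Sum>\<pi>\<in>{\<pi>. \<pi> permutes {0..<n}}. signof \<pi> *
     (\<Prod>i\<in>{0..<n}. (\<Sum>\<rho>\<in>R. rcoef \<rho> env (e i) * rcoef \<rho> env (e (\<pi> i)))))"
      unfolding det_def'[OF Gm_carrier]
    proof (intro sum.cong refl arg_cong2[where f="(*)"] prod.cong)
      fix \<pi> i assume "\<pi> \<in> {\<pi>. \<pi> permutes {0..<n}}" "i \<in> {0..<n}"
      then have "\<pi> i < n" "i < n" using permutes_in_image by fastforce+
      then show "Gm R e n env $$ (i, \<pi> i) = (\<Sum>\<rho>\<in>R. rcoef \<rho> env (e i) * rcoef \<rho> env (e (\<pi> i)))"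
        by (simp add: Gm_def)
    qed
  qed
  show ?thesis
    unfolding eq
    apply (rule polyfun_sum)
     apply (simp add: finite_permutations)
    apply (rule polyfun_mult[OF polyfun_int])
    apply (rule polyfun_prod, simp)
    apply (rule polyfun_sum[OF R])
    apply (rule polyfun_mult; rule polyfun_rcoef)
    using pf by auto
qed

lemma generic_kernel:
  assumes gen: "generic_cyl V p" and W: "finite W" and R: "finite R"
    and RW: "\<forall>\<rho>\<in>R. fst ` set \<rho> \<subseteq> W"
    and pf: "\<forall>\<rho>\<in>R. \<forall>(a,d)\<in>set \<rho>. \<forall>k. polyfun (V \<times> UNIV) (\<lambda>e. vec_nth (d e) k)"
    and q: "framework_on_cyl V q"
    and kq: "\<forall>u. (\<forall>\<rho>\<in>R. rowval \<rho> (coords q) u = 0) \<longrightarrow> (\<forall>w\<in>W. u w = 0)"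
  shows "\<forall>u. (\<forall>\<rho>\<in>R. rowval \<rho> (coords p) u = 0) \<longrightarrow> (\<forall>w\<in>W. u w = 0)"
proof -
  have fin: "finite (W \<times> (UNIV :: 3 set))" using W by simp
  obtain e :: "nat \<Rightarrow> 'a \<times> 3" where e: "bij_betw e {0..<card (W \<times> (UNIV :: 3 set))} (W \<times> UNIV)"
    using ex_bij_betw_nat_finite[OF fin] by (elim exE) (rule that)
  define n where "n = card (W \<times> (UNIV :: 3 set))"
  have e': "bij_betw e {0..<n} (W \<times> UNIV)" using e n_def by simp
  note KI = kernel_iff[OF W R RW e']
  have pd: "polyfun (V \<times> UNIV) (\<lambda>env. det (Gm R e n env))"
    by (rule polyfun_det[OF R pf])
  have "det (Gm R e n (coords q)) \<noteq> 0"
    by (subst KI) (rule kq)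
  then have "det (Gm R e n (coords p)) \<noteq> 0"
    by (rule generic_nonzero[OF gen pd q])
  then show ?thesis by (subst (asm) KI)
qed

fun rsubst :: "('v \<Rightarrow> 'w rpoly) \<Rightarrow> 'v rpoly \<Rightarrow> 'w rpoly" where
  "rsubst s (Var x) = s x"
| "rsubst s (Const c) = Const c"
| "rsubst s (Add f g) = Add (rsubst s f) (rsubst s g)"
| "rsubst s (Mul f g) = Mul (rsubst s f) (rsubst s g)"

lemma eval_rsubst: "rpoly_eval (rsubst s f) env = rpoly_eval f (\<lambda>x. rpoly_eval (s x) env)"
  by (induction f) auto

lemma vars_rsubst: "rpoly_vars (rsubst s f) = (\<Union>x\<in>rpoly_vars f. rpoly_vars (s x))"
  by (induction f) auto

lemma eval_cong: "(\<And>x. x \<in> rpoly_vars f \<Longrightarrow> e1 x = e2 x) \<Longrightarrow> rpoly_eval f e1 = rpoly_eval f e2"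
  by (induction f) auto

lemma generic_transfer:
  fixes V :: "'a set"
  assumes gen: "generic_cyl ((V - {v}) \<union> {w1, w2, w3, w4}) p'"
    and vV: "v \<in> V" and dist: "distinct [w1, w2, w3, w4]" and disj: "{w1, w2, w3, w4} \<inter> V = {}"
    and fin: "finite V"
  shows "generic_cyl V (\<lambda>x. if x = v then p' w1 else p' x)"
proof -
  let ?V' = "(V - {v}) \<union> {w1, w2, w3, w4}"
  let ?p = "\<lambda>x. if x = v then p' w1 else p' x"
  have w1V: "w1 \<notin> V" and w2V: "w2 \<notin> V" and w3V: "w3 \<notin> V" and w4V: "w4 \<notin> V" using disj by auto
  have dd: "w1 \<noteq> w2" "w1 \<noteq> w3" "w1 \<noteq> w4" "w2 \<noteq> w3" "w2 \<noteq> w4" "w3 \<noteq> w4"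
     "w2 \<noteq> w1" "w3 \<noteq> w1" "w4 \<noteq> w1" "w3 \<noteq> w2" "w4 \<noteq> w2" "w4 \<noteq> w3" using dist by auto
  have fr': "framework_on_cyl ?V' p'" using gen by (simp add: generic_cyl_def)
  have fr: "framework_on_cyl V ?p" using fr' unfolding framework_on_cyl_def by auto
  show ?thesis
    unfolding generic_cyl_def
  proof (intro conjI fr allI impI)
    fix f :: "('a \<times> 3) rpoly"
    assume fv: "rpoly_vars f \<subseteq> V \<times> UNIV" and f0: "rpoly_eval f (coords ?p) = 0"
    define \<rho> where "\<rho> z = (if fst z = v then Var (w1, snd z) else Var z)" for z :: "'a \<times> 3"
    define f' where "f' = rsubst \<rho> f"
    have ev': "rpoly_eval f' env = rpoly_eval f (\<lambda>z. if fst z = v then env (w1, snd z) else env z)" for env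
      unfolding f'_def eval_rsubst by (rule eval_cong) (simp add: \<rho>_def)
    have "(\<lambda>z. if fst z = v then coords p' (w1, snd z) else coords p' z) = coords ?p"
      by (auto simp: coords_def)
    then have "rpoly_eval f' (coords p') = 0" using f0 ev' by simp
    moreover have "rpoly_vars f' \<subseteq> ?V' \<times> UNIV"
      unfolding f'_def vars_rsubst using fv by (auto simp: \<rho>_def split: if_splits)
    ultimately have "in_cyl_ideal ?V' f'" using gen unfolding generic_cyl_def by blast
    then obtain h' where h'v: "\<forall>y\<in>?V'. rpoly_vars (h' y) \<subseteq> ?V' \<times> UNIV"
      and h'e: "\<And>env. rpoly_eval f' env =
         (\<Sum>y\<in>?V'. rpoly_eval (h' y) env * ((env (y, 1))\<^sup>2 + (env (y, 2))\<^sup>2 - 1))"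
      unfolding in_cyl_ideal_def by blast
    define \<tau> where "\<tau> z = (if fst z = w1 then Var (v, snd z)
        else if fst z \<in> {w2, w3, w4} then Const (if snd z = 1 then 1 else 0) else Var z)" for z :: "'a \<times> 3"
    define h where "h y = rsubst \<tau> (if y = v then h' w1 else h' y)" for y
    show "in_cyl_ideal V f"
      unfolding in_cyl_ideal_def
    proof (intro exI conjI ballI allI)
      fix y assume y: "y \<in> V"
      have "rpoly_vars (if y = v then h' w1 else h' y) \<subseteq> ?V' \<times> UNIV"
        using h'v y by auto
      then show "rpoly_vars (h y) \<subseteq> V \<times> UNIV"
        unfolding h_def vars_rsubst using vV by (fastforce simp: \<tau>_def split: if_splits)
    next
      fix env :: "'a \<times> 3 \<Rightarrow> real"
      define E where "E = (\<lambda>z. rpoly_eval (\<tau> z) env)"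
      let ?g = "\<lambda>en y. (en (y, 1))\<^sup>2 + (en (y, 2))\<^sup>2 - (1::real)"
      have "rpoly_eval f env = rpoly_eval f (\<lambda>z. if fst z = v then E (w1, snd z) else E z)"
      proof (rule eval_cong)
        fix z assume "z \<in> rpoly_vars f"
        then have "fst z \<in> V" using fv by auto
        then show "env z = (if fst z = v then E (w1, snd z) else E z)"
          using w1V w2V w3V w4V by (cases z) (auto simp: E_def \<tau>_def)
      qed
      also have "\<dots> = rpoly_eval f' E" by (simp add: ev')
      also have "\<dots> = (\<Sum>y\<in>?V'. rpoly_eval (h' y) E * ?g E y)" by (rule h'e)
      also have "?V' = insert w1 (insert w2 (insert w3 (insert w4 (V - {v}))))" by auto
      also have "(\<Sum>y\<in>insert w1 (insert w2 (insert w3 (insert w4 (V - {v})))). rpoly_eval (h' y) E * ?g E y)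
          = rpoly_eval (h' w1) E * ?g E w1 + (\<Sum>y\<in>V - {v}. rpoly_eval (h' y) E * ?g E y)"
        using dd w1V w2V w3V w4V fin by (simp add: E_def \<tau>_def)
      also have "rpoly_eval (h' w1) E * ?g E w1 = rpoly_eval (h v) env * ?g env v"
        by (simp add: h_def eval_rsubst E_def \<tau>_def)
      also have "(\<Sum>y\<in>V - {v}. rpoly_eval (h' y) E * ?g E y) = (\<Sum>y\<in>V - {v}. rpoly_eval (h y) env * ?g env y)"
      proof (rule sum.cong[OF refl])
        fix y assume y: "y \<in> V - {v}"
        then have "y \<noteq> w1" "y \<notin> {w2, w3, w4}" using w1V w2V w3V w4V by auto
        then show "rpoly_eval (h' y) E * ?g E y = rpoly_eval (h y) env * ?g env y"
          using y by (simp add: h_def eval_rsubst E_def \<tau>_def)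
      qed
      also have "rpoly_eval (h v) env * ?g env v + (\<Sum>y\<in>V - {v}. rpoly_eval (h y) env * ?g env y)
          = (\<Sum>y\<in>V. rpoly_eval (h y) env * ?g env y)"
        using sum.remove[OF fin vV, of "\<lambda>y. rpoly_eval (h y) env * ?g env y"] by simp
      finally show "rpoly_eval f env = (\<Sum>y\<in>V. rpoly_eval (h y) env * ?g env y)" .
    qed
  qed
qed

definition vec3 :: "('a \<times> 3 \<Rightarrow> real) \<Rightarrow> 'a \<Rightarrow> real^3" where
  "vec3 e x = (\<chi> k. e (x, k))"

lemma vec3_nth[simp]: "vec_nth (vec3 e x) k = e (x, k)"
  by (simp add: vec3_def)

lemma vec3_coords[simp]: "vec3 (coords p) x = p x"
  by (simp add: vec3_def coords_def Finite_Cartesian_Product.vec_eq_iff)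

definition Tm :: "real \<Rightarrow> real \<Rightarrow> real^3 \<Rightarrow> real^3" where
  "Tm \<alpha> t y = vector [- \<alpha> * y $ 2, \<alpha> * y $ 1, t]"

lemma Tm_edge: "inner (x - y) (Tm \<alpha> t x - Tm \<alpha> t y) = 0"
  by (simp add: Tm_def inner_vec_def sum_3 algebra_simps)

lemma Tm_normal: "inner (cyl_normal x) (Tm \<alpha> t x) = 0"
  by (simp add: Tm_def cyl_normal_def inner_vec_def sum_3 algebra_simps)

lemma Tm_rigid: "\<exists>A b. tangential_inf_isometry A b \<and> (\<forall>y. A *v y + b = Tm \<alpha> t y)"
proof (intro exI conjI allI)
  let ?A = "vector [vector [0, - \<alpha>, 0], vector [\<alpha>, 0, 0], vector [0, 0, 0]] :: real^3^3"
  let ?b = "vector [0, 0, t] :: real^3"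
  show eq: "?A *v y + ?b = Tm \<alpha> t y" for y
    by (simp add: Tm_def matrix_vector_mult_def sum_3 Finite_Cartesian_Product.vec_eq_iff forall_3)
  show "tangential_inf_isometry ?A ?b"
    unfolding tangential_inf_isometry_def
  proof (intro conjI allI impI)
    show "transpose ?A = - ?A"
      by (simp add: transpose_def Finite_Cartesian_Product.vec_eq_iff forall_3)
    fix q show "inner (cyl_normal q) (?A *v q + ?b) = 0" unfolding eq by (rule Tm_normal)
  qed
qed

lemma tang_form:
  assumes "tangential_inf_isometry A b"
  shows "\<exists>\<alpha> t. \<forall>y. A *v y + b = Tm \<alpha> t y"
proof -
  have sk: "transpose A = - A" and tg: "\<And>q. on_cyl q \<Longrightarrow> inner (cyl_normal q) (A *v q + b) = 0"
    using assms by (auto simp: tangential_inf_isometry_def)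
  have skew: "A $ i $ j = - (A $ j $ i)" for i j
    using arg_cong[OF sk, of "\<lambda>M. M $ j $ i"] by (simp add: transpose_def)
  have d: "A $ i $ i = 0" for i using skew[of i i] by simp
  have c1: "A $ 1 $ 3 * z + b $ 1 = 0" for z
  proof -
    have "on_cyl (vector [1, 0, z])" by (simp add: on_cyl_def)
    from tg[OF this] show ?thesis
      by (simp add: cyl_normal_def inner_vec_def sum_3 matrix_vector_mult_def d)
  qed
  have c2: "A $ 2 $ 3 * z + b $ 2 = 0" for z
  proof -
    have "on_cyl (vector [0, 1, z])" by (simp add: on_cyl_def)
    from tg[OF this] show ?thesis
      by (simp add: cyl_normal_def inner_vec_def sum_3 matrix_vector_mult_def d)
  qed
  have b1: "b $ 1 = 0" and a13: "A $ 1 $ 3 = 0" using c1[of 0] c1[of 1] by auto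
  have b2: "b $ 2 = 0" and a23: "A $ 2 $ 3 = 0" using c2[of 0] c2[of 1] by auto
  have a31: "A $ 3 $ 1 = 0" and a32: "A $ 3 $ 2 = 0" using skew[of 3 1] skew[of 3 2] a13 a23 by auto
  have a12: "A $ 1 $ 2 = - A $ 2 $ 1" using skew[of 1 2] by simp
  show ?thesis
    by (rule exI[of _ "A $ 2 $ 1"], rule exI[of _ "b $ 3"])
       (simp add: Tm_def matrix_vector_mult_def sum_3 Finite_Cartesian_Product.vec_eq_iff forall_3
          d b1 b2 a13 a23 a31 a32 a12)
qed

definition edgerow :: "'a \<Rightarrow> 'a \<Rightarrow> 'a rowt" where
  "edgerow a b = [(a, \<lambda>e. vec3 e a - vec3 e b), (b, \<lambda>e. vec3 e b - vec3 e a)]"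
definition normrow :: "'a \<Rightarrow> 'a rowt" where
  "normrow a = [(a, \<lambda>e. cyl_normal (vec3 e a))]"
definition nbrow :: "'a \<Rightarrow> 'a \<Rightarrow> 'a rowt" where
  "nbrow x y = [(x, \<lambda>e. vec3 e x - vec3 e y)]"
definition pin1 :: "'a \<Rightarrow> 'a rowt" where
  "pin1 a = [(a, \<lambda>e. vector [0, 0, 1])]"
definition pin2 :: "'a \<Rightarrow> 'a rowt" where
  "pin2 a = [(a, \<lambda>e. vector [- e (a, 2), e (a, 1), 0])]"

lemma rowval_edgerow: "rowval (edgerow a b) e u = inner (vec3 e a - vec3 e b) (u a - u b)"
  by (simp add: rowval_def edgerow_def inner_diff_left inner_diff_right algebra_simps)
lemma rowval_normrow: "rowval (normrow a) e u = inner (cyl_normal (vec3 e a)) (u a)"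
  by (simp add: rowval_def normrow_def)
lemma rowval_nbrow: "rowval (nbrow x y) e u = inner (vec3 e x - vec3 e y) (u x)"
  by (simp add: rowval_def nbrow_def)
lemma rowval_pin1: "rowval (pin1 a) e u = u a $ 3"
  by (simp add: rowval_def pin1_def inner_vec_def sum_3)
lemma rowval_pin2: "rowval (pin2 a) e u = - e (a, 2) * u a $ 1 + e (a, 1) * u a $ 2"
  by (simp add: rowval_def pin2_def inner_vec_def sum_3)

definition rowpf :: "'a set \<Rightarrow> 'a rowt \<Rightarrow> bool" where
  "rowpf VS \<rho> \<longleftrightarrow> (\<forall>(a,d)\<in>set \<rho>. \<forall>k. polyfun (VS \<times> UNIV) (\<lambda>e. vec_nth (d e) k))"

lemma polyfun_vector3:
  assumes "polyfun W f1" "polyfun W f2" "polyfun W f3"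
  shows "polyfun W (\<lambda>e. vec_nth (vector [f1 e, f2 e, f3 e] :: real^3) k)"
  using exhaust_3[of k] assms by auto

lemma polyfun_vec3: "a \<in> VS \<Longrightarrow> polyfun (VS \<times> UNIV) (\<lambda>e. vec_nth (vec3 e a) k)"
  by (simp add: polyfun_var)

lemma rowpf_edgerow: "a \<in> VS \<Longrightarrow> b \<in> VS \<Longrightarrow> rowpf VS (edgerow a b)"
  by (simp add: rowpf_def edgerow_def polyfun_diff polyfun_var)
lemma rowpf_nbrow: "a \<in> VS \<Longrightarrow> b \<in> VS \<Longrightarrow> rowpf VS (nbrow a b)"
  by (simp add: rowpf_def nbrow_def polyfun_diff polyfun_var)
lemma rowpf_normrow: "a \<in> VS \<Longrightarrow> rowpf VS (normrow a)"
  unfolding rowpf_def normrow_def cyl_normal_def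
  by (simp del: vector_3 add: polyfun_vector3 polyfun_mult polyfun_var polyfun_int polyfun_zero
        polyfun_int[of _ 2, simplified])
lemma rowpf_pin1: "rowpf VS (pin1 a)"
  unfolding rowpf_def pin1_def
  by (simp del: vector_3 add: polyfun_vector3 polyfun_zero polyfun_int[of _ 1, simplified])
lemma rowpf_pin2: "a \<in> VS \<Longrightarrow> rowpf VS (pin2 a)"
  unfolding rowpf_def pin2_def
  by (simp del: vector_3 add: polyfun_vector3 polyfun_zero polyfun_uminus polyfun_var)

definition RA :: "'a \<Rightarrow> 'a set \<Rightarrow> 'a rowt set" where
  "RA w1 K = {edgerow a b | a b. a \<in> K \<and> b \<in> K \<and> a \<noteq> b} \<union> normrow ` K \<union> {pin1 w1, pin2 w1}"

lemma K4_lin: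
  fixes a1 b1 c1 a2 b2 c2 a3 b3 c3 a4 b4 c4 :: real
  assumes "a1 = 0" "b2 = 0" "a3 = 0" "b4 = 0" "b1 = 0" "c1 = 0"
    "(a1 - a2) - (b1 - b2) = 0" "2 * (a1 - a3) - (c1 - c3) = 0"
    "(a1 - a4) + (b1 - b4) - 2 * (c1 - c4) = 0" "(a2 - a3) + (b2 - b3) - (c2 - c3) = 0"
    "2 * (b2 - b4) - 2 * (c2 - c4) = 0" "- (a3 - a4) + (b3 - b4) - (c3 - c4) = 0"
  shows "a1 = 0 \<and> b1 = 0 \<and> c1 = 0 \<and> a2 = 0 \<and> b2 = 0 \<and> c2 = 0 \<and>
         a3 = 0 \<and> b3 = 0 \<and> c3 = 0 \<and> a4 = 0 \<and> b4 = 0 \<and> c4 = 0"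
proof -
  have x2: "a2 = 0" using assms by argo
  have y3: "c3 = 0" using assms by argo
  have y4: "c4 = 0" using assms by argo
  have y2: "c2 = 0" using assms y4 by argo
  have x4: "a4 = 0" using assms y4 by argo
  have z3: "b3 = 0" using assms y2 y3 x2 by argo
  show ?thesis using assms x2 y3 y4 y2 x4 z3 by simp
qed

lemma K4_specific:
  assumes dist: "distinct [w1, w2, w3, w4]"
    and q1: "q0 w1 = vector [1, 0, 0]" and q2: "q0 w2 = vector [0, 1, 0]"
    and q3: "q0 w3 = vector [-1, 0, 1]" and q4: "q0 w4 = vector [0, -1, 2]"
  shows "\<forall>u. (\<forall>\<rho>\<in>RA w1 {w1, w2, w3, w4}. rowval \<rho> (coords q0) u = 0) \<longrightarrow> (\<forall>w\<in>{w1, w2, w3, w4}. u w = 0)"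
proof (intro allI impI)
  fix u :: "'a \<Rightarrow> real^3"
  let ?K = "{w1, w2, w3, w4}"
  assume H: "\<forall>\<rho>\<in>RA w1 ?K. rowval \<rho> (coords q0) u = 0"
  have E: "\<And>a b. a \<in> ?K \<Longrightarrow> b \<in> ?K \<Longrightarrow> a \<noteq> b \<Longrightarrow> inner (q0 a - q0 b) (u a - u b) = 0"
  proof -
    fix a b assume "a \<in> ?K" "b \<in> ?K" "a \<noteq> b"
    then have "edgerow a b \<in> RA w1 ?K" unfolding RA_def by blast
    then have "rowval (edgerow a b) (coords q0) u = 0" using H by blast
    then show "inner (q0 a - q0 b) (u a - u b) = 0" by (simp add: rowval_edgerow)
  qed
  have N: "\<And>a. a \<in> ?K \<Longrightarrow> inner (cyl_normal (q0 a)) (u a) = 0"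
  proof -
    fix a assume "a \<in> ?K"
    then have "normrow a \<in> RA w1 ?K" unfolding RA_def by blast
    then have "rowval (normrow a) (coords q0) u = 0" using H by blast
    then show "inner (cyl_normal (q0 a)) (u a) = 0" by (simp add: rowval_normrow)
  qed
  have "pin1 w1 \<in> RA w1 ?K" "pin2 w1 \<in> RA w1 ?K" unfolding RA_def by blast+
  then have "rowval (pin1 w1) (coords q0) u = 0" "rowval (pin2 w1) (coords q0) u = 0" using H by blast+
  then have P1: "u w1 $ 3 = 0" and P2: "- coords q0 (w1, 2) * u w1 $ 1 + coords q0 (w1, 1) * u w1 $ 2 = 0"
    by (simp_all add: rowval_pin1 rowval_pin2)
  have dd: "w1 \<noteq> w2" "w1 \<noteq> w3" "w1 \<noteq> w4" "w2 \<noteq> w3" "w2 \<noteq> w4" "w3 \<noteq> w4" using dist by auto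
  note S = inner_vec_def sum_3 cyl_normal_def q1 q2 q3 q4 coords_def
  have n1: "u w1 $ 1 = 0" using N[of w1] by (simp add: S)
  have n2: "u w2 $ 2 = 0" using N[of w2] by (simp add: S)
  have n3: "u w3 $ 1 = 0" using N[of w3] by (simp add: S)
  have n4: "u w4 $ 2 = 0" using N[of w4] by (simp add: S)
  have p2: "u w1 $ 2 = 0" using P2 by (simp add: S)
  have e12: "(u w1 $ 1 - u w2 $ 1) - (u w1 $ 2 - u w2 $ 2) = 0" using E[of w1 w2] dd by (simp add: S)
  have e13: "2 * (u w1 $ 1 - u w3 $ 1) - (u w1 $ 3 - u w3 $ 3) = 0" using E[of w1 w3] dd by (simp add: S algebra_simps)
  have e14: "(u w1 $ 1 - u w4 $ 1) + (u w1 $ 2 - u w4 $ 2) - 2 * (u w1 $ 3 - u w4 $ 3) = 0" using E[of w1 w4] dd by (simp add: S algebra_simps)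
  have e23: "(u w2 $ 1 - u w3 $ 1) + (u w2 $ 2 - u w3 $ 2) - (u w2 $ 3 - u w3 $ 3) = 0" using E[of w2 w3] dd by (simp add: S algebra_simps)
  have e24: "2 * (u w2 $ 2 - u w4 $ 2) - 2 * (u w2 $ 3 - u w4 $ 3) = 0" using E[of w2 w4] dd by (simp add: S algebra_simps)
  have e34: "- (u w3 $ 1 - u w4 $ 1) + (u w3 $ 2 - u w4 $ 2) - (u w3 $ 3 - u w4 $ 3) = 0" using E[of w3 w4] dd by (simp add: S algebra_simps)
  have z: "u w1 $ 1 = 0 \<and> u w1 $ 2 = 0 \<and> u w1 $ 3 = 0 \<and> u w2 $ 1 = 0 \<and> u w2 $ 2 = 0 \<and> u w2 $ 3 = 0 \<and>
           u w3 $ 1 = 0 \<and> u w3 $ 2 = 0 \<and> u w3 $ 3 = 0 \<and> u w4 $ 1 = 0 \<and> u w4 $ 2 = 0 \<and> u w4 $ 3 = 0"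
    using K4_lin[OF n1 n2 n3 n4 p2 P1 e12 e13 e14 e23 e24 e34] by blast
  show "\<forall>w\<in>?K. u w = 0"
    using z by (auto simp: Finite_Cartesian_Product.vec_eq_iff forall_3)
qed

lemma pin2_alg:
  fixes x y a u1 u2 :: real
  assumes h: "x\<^sup>2 + y\<^sup>2 = 1" and a: "a = - y * u1 + x * u2"
  shows "- y * (u1 - - a * y) + x * (u2 - a * x) = 0"
proof -
  have "- y * (u1 - - a * y) + x * (u2 - a * x) = (- y * u1 + x * u2) - a * (x\<^sup>2 + y\<^sup>2)"
    by (simp add: power2_eq_square algebra_simps)
  then show ?thesis using h a by simp
qed

theorem corollary5p3:
  fixes V V' :: "'a set" and E E' :: "'a set set"
  assumes "simple_graph V E"
    and "vertex_to_K4 V E V' E'"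
    and "gen_inf_rigid_cyl V E"
  shows "gen_inf_rigid_cyl V' E'"
proof -
  obtain v w1 w2 w3 w4 c where vV: "v \<in> V" and dist: "distinct [w1, w2, w3, w4]"
    and disj: "{w1, w2, w3, w4} \<inter> V = {}"
    and cK: "\<forall>x. {x, v} \<in> E \<longrightarrow> c x \<in> {w1, w2, w3, w4}"
    and V'eq: "V' = (V - {v}) \<union> {w1, w2, w3, w4}"
    and E'eq: "E' = {e \<in> E. v \<notin> e} \<union> {{x, c x} | x. {x, v} \<in> E}
             \<union> {{a, b} | a b. a \<in> {w1, w2, w3, w4} \<and> b \<in> {w1, w2, w3, w4} \<and> a \<noteq> b}"
    using assms(2) unfolding vertex_to_K4_def by blast
  let ?K = "{w1, w2, w3, w4}"
  let ?W = "V - {v}"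
  have finV: "finite V" using assms(1) by (simp add: simple_graph_def)
  have Eed: "\<And>x y. {x, y} \<in> E \<Longrightarrow> x \<noteq> y \<and> x \<in> V \<and> y \<in> V"
  proof -
    fix x y assume "{x, y} \<in> E"
    then obtain a b where "a \<noteq> b" "a \<in> V" "b \<in> V" "{x, y} = {a, b}"
      using assms(1) unfolding simple_graph_def by blast
    then show "x \<noteq> y \<and> x \<in> V \<and> y \<in> V" by (auto simp: doubleton_eq_iff)
  qed
  have KV: "x \<in> ?K \<Longrightarrow> x \<notin> V" for x using disj by auto
  have KV': "?K \<subseteq> V'" and WV': "?W \<subseteq> V'" using V'eq by auto
  show ?thesis
    unfolding gen_inf_rigid_cyl_def inf_rigid_def
  proof (intro allI impI)
    fix p' u
    assume gen': "generic_cyl V' p'" and fl: "inf_flex V' E' p' u"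
    have onp': "\<And>x. x \<in> V' \<Longrightarrow> on_cyl (p' x)"
      using gen' by (simp add: generic_cyl_def framework_on_cyl_def)
    define p where "p = (\<lambda>x. if x = v then p' w1 else p' x)"
    have genp: "generic_cyl V p"
      unfolding p_def by (rule generic_transfer[OF gen'[unfolded V'eq] vV dist disj finV])
    have onp: "\<And>x. x \<in> V \<Longrightarrow> on_cyl (p x)"
      using genp by (simp add: generic_cyl_def framework_on_cyl_def)
    have rigG: "inf_rigid V E p" using assms(3) genp by (simp add: gen_inf_rigid_cyl_def)
    have finA: "finite (RA w1 ?K)"
    proof -
      have "{edgerow a b | a b. a \<in> ?K \<and> b \<in> ?K \<and> a \<noteq> b} \<subseteq> (\<lambda>(a, b). edgerow a b) ` (?K \<times> ?K)"
        by auto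
      then have "finite {edgerow a b | a b. a \<in> ?K \<and> b \<in> ?K \<and> a \<noteq> b}"
        by (rule finite_subset) simp
      then show ?thesis unfolding RA_def by simp
    qed
    have RWA: "\<forall>\<rho>\<in>RA w1 ?K. fst ` set \<rho> \<subseteq> ?K"
      unfolding RA_def by (auto simp: edgerow_def normrow_def pin1_def pin2_def)
    have pfA: "\<forall>\<rho>\<in>RA w1 ?K. \<forall>(a,d)\<in>set \<rho>. \<forall>k. polyfun (V' \<times> UNIV) (\<lambda>e. vec_nth (d e) k)"
    proof
      fix \<rho> assume "\<rho> \<in> RA w1 ?K"
      then have "rowpf V' \<rho>"
        unfolding RA_def using KV'
        by (auto intro: rowpf_edgerow rowpf_normrow rowpf_pin1 rowpf_pin2)
      then show "\<forall>(a,d)\<in>set \<rho>. \<forall>k. polyfun (V' \<times> UNIV) (\<lambda>e. vec_nth (d e) k)"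
        by (simp add: rowpf_def)
    qed
    define q0 where "q0 = (\<lambda>x. if x = w1 then vector [1, 0, 0] else if x = w2 then vector [0, 1, 0]
        else if x = w3 then vector [-1, 0, 1] else if x = w4 then vector [0, -1, 2] else vector [1, 0, 0] :: real^3)"
    have dd: "w1 \<noteq> w2" "w1 \<noteq> w3" "w1 \<noteq> w4" "w2 \<noteq> w3" "w2 \<noteq> w4" "w3 \<noteq> w4"
     "w2 \<noteq> w1" "w3 \<noteq> w1" "w4 \<noteq> w1" "w3 \<noteq> w2" "w4 \<noteq> w2" "w4 \<noteq> w3" using dist by auto
    have q0fr: "framework_on_cyl V' q0"
      unfolding framework_on_cyl_def q0_def by (simp add: on_cyl_def)
    have kq0: "\<forall>u. (\<forall>\<rho>\<in>RA w1 ?K. rowval \<rho> (coords q0) u = 0) \<longrightarrow> (\<forall>w\<in>?K. u w = 0)"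
      by (rule K4_specific[OF dist]) (simp_all add: q0_def dd)
    have kA: "\<forall>u. (\<forall>\<rho>\<in>RA w1 ?K. rowval \<rho> (coords p') u = 0) \<longrightarrow> (\<forall>w\<in>?K. u w = 0)"
      by (rule generic_kernel[OF gen' _ finA RWA pfA q0fr kq0]) simp
    define RB where "RB = {edgerow x y | x y. {x, y} \<in> E \<and> x \<noteq> v \<and> y \<noteq> v} \<union> normrow ` ?W
        \<union> {nbrow x (c x) | x. {x, v} \<in> E}"
    have finB: "finite RB"
    proof -
      have "{edgerow x y | x y. {x, y} \<in> E \<and> x \<noteq> v \<and> y \<noteq> v} \<subseteq> (\<lambda>(a, b). edgerow a b) ` (V \<times> V)"
        using Eed by fastforce
      then have f1: "finite {edgerow x y | x y. {x, y} \<in> E \<and> x \<noteq> v \<and> y \<noteq> v}"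
        by (rule finite_subset) (simp add: finV)
      have "{nbrow x (c x) | x. {x, v} \<in> E} \<subseteq> (\<lambda>x. nbrow x (c x)) ` V"
        using Eed by fastforce
      then have f2: "finite {nbrow x (c x) | x. {x, v} \<in> E}"
        by (rule finite_subset) (simp add: finV)
      show ?thesis unfolding RB_def using f1 f2 finV by simp
    qed
    have RWB: "\<forall>\<rho>\<in>RB. fst ` set \<rho> \<subseteq> ?W"
      unfolding RB_def using Eed by (fastforce simp: edgerow_def normrow_def nbrow_def)
    have pfB: "\<forall>\<rho>\<in>RB. \<forall>(a,d)\<in>set \<rho>. \<forall>k. polyfun (V' \<times> UNIV) (\<lambda>e. vec_nth (d e) k)"
    proof
      fix \<rho> assume r: "\<rho> \<in> RB"
      have "rowpf V' \<rho>"
        using r unfolding RB_def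
      proof (elim UnE)
        assume "\<rho> \<in> {edgerow x y | x y. {x, y} \<in> E \<and> x \<noteq> v \<and> y \<noteq> v}"
        then obtain x y where "\<rho> = edgerow x y" "{x, y} \<in> E" "x \<noteq> v" "y \<noteq> v" by blast
        then show ?thesis using Eed WV' by (auto intro!: rowpf_edgerow)
      next
        assume "\<rho> \<in> normrow ` ?W"
        then show ?thesis using WV' by (auto intro!: rowpf_normrow)
      next
        assume "\<rho> \<in> {nbrow x (c x) | x. {x, v} \<in> E}"
        then obtain x where "\<rho> = nbrow x (c x)" "{x, v} \<in> E" by blast
        then show ?thesis using Eed WV' KV' cK by (auto intro!: rowpf_nbrow)
      qed
      then show "\<forall>(a,d)\<in>set \<rho>. \<forall>k. polyfun (V' \<times> UNIV) (\<lambda>e. vec_nth (d e) k)"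
        by (simp add: rowpf_def)
    qed
    define q where "q = (\<lambda>x. if x \<in> ?K then p v else p x)"
    have qfr: "framework_on_cyl V' q"
      unfolding framework_on_cyl_def q_def using onp vV V'eq by auto
    have kq: "\<forall>u0. (\<forall>\<rho>\<in>RB. rowval \<rho> (coords q) u0 = 0) \<longrightarrow> (\<forall>w\<in>?W. u0 w = 0)"
    proof (intro allI impI)
      fix u0 assume H: "\<forall>\<rho>\<in>RB. rowval \<rho> (coords q) u0 = 0"
      define U where "U = (\<lambda>x. if x = v then 0 else u0 x)"
      have qp: "\<And>x. x \<in> V \<Longrightarrow> q x = p x" using KV by (auto simp: q_def)
      have nb: "\<And>x. {x, v} \<in> E \<Longrightarrow> inner (p x - p v) (u0 x) = 0"
      proof -
        fix x assume xv: "{x, v} \<in> E"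
        then have "nbrow x (c x) \<in> RB" unfolding RB_def by blast
        then have "rowval (nbrow x (c x)) (coords q) u0 = 0" using H by blast
        moreover have "q (c x) = p v" using cK xv by (simp add: q_def)
        moreover have "q x = p x" using Eed[OF xv] qp by blast
        ultimately show "inner (p x - p v) (u0 x) = 0" by (simp add: rowval_nbrow)
      qed
      have "inf_flex V E p U"
        unfolding inf_flex_def
      proof (intro conjI allI impI ballI)
        fix x y assume xy: "{x, y} \<in> E"
        have xy': "x \<noteq> y" "x \<in> V" "y \<in> V" using Eed[OF xy] by auto
        show "inner (p x - p y) (U x - U y) = 0"
        proof (cases "x = v")
          case True
          then have "{y, v} \<in> E" using xy by (simp add: insert_commute)
          from nb[OF this] have "inner (p y - p v) (u0 y) = 0" .
          then show ?thesis using True xy' by (simp add: U_def inner_diff_left inner_diff_right)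
        next
          case xnv: False
          show ?thesis
          proof (cases "y = v")
            case True
            then show ?thesis using nb[of x] xy xnv by (simp add: U_def)
          next
            case ynv: False
            then have "edgerow x y \<in> RB" unfolding RB_def using xy xnv by blast
            then have "rowval (edgerow x y) (coords q) u0 = 0" using H by blast
            then show ?thesis using xnv ynv qp xy' by (simp add: rowval_edgerow U_def)
          qed
        qed
      next
        fix x assume xV: "x \<in> V"
        show "inner (cyl_normal (p x)) (U x) = 0"
        proof (cases "x = v")
          case True then show ?thesis by (simp add: U_def)
        next
          case False
          then have "normrow x \<in> RB" unfolding RB_def using xV by blast
          then have "rowval (normrow x) (coords q) u0 = 0" using H by blast
          then show ?thesis using False qp[OF xV] by (simp add: rowval_normrow U_def)
        qed
      qed
      then have "rigid_motion_flex V p U" using rigG by (simp add: inf_rigid_def)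
      then obtain A b where tg: "tangential_inf_isometry A b" and Ueq: "\<forall>x\<in>V. U x = A *v p x + b"
        unfolding rigid_motion_flex_def by blast
      obtain \<alpha> t where Tf: "\<forall>y. A *v y + b = Tm \<alpha> t y" using tang_form[OF tg] by blast
      have "Tm \<alpha> t (p v) = U v" using Ueq Tf vV by metis
      then have "Tm \<alpha> t (p v) = 0" by (simp add: U_def)
      then have z: "\<alpha> * p v $ 2 = 0" "\<alpha> * p v $ 1 = 0" "t = 0"
        by (simp_all add: Tm_def Finite_Cartesian_Product.vec_eq_iff forall_3)
      have "(p v $ 1)\<^sup>2 + (p v $ 2)\<^sup>2 = 1" using onp[OF vV] by (simp add: on_cyl_def)
      then have "\<alpha> = \<alpha> * (p v $ 1) * (p v $ 1) + \<alpha> * (p v $ 2) * (p v $ 2)"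
        by (simp add: power2_eq_square algebra_simps flip: distrib_left)
      then have a0: "\<alpha> = 0" using z by simp
      show "\<forall>w\<in>?W. u0 w = 0"
      proof
        fix w assume w: "w \<in> ?W"
        then have "U w = Tm \<alpha> t (p w)" using Ueq Tf by auto
        then show "u0 w = 0" using w a0 z by (simp add: U_def Tm_def Finite_Cartesian_Product.vec_eq_iff forall_3)
      qed
    qed
    have kB: "\<forall>u0. (\<forall>\<rho>\<in>RB. rowval \<rho> (coords p') u0 = 0) \<longrightarrow> (\<forall>w\<in>?W. u0 w = 0)"
      by (rule generic_kernel[OF gen' _ finB RWB pfB qfr kq]) (simp add: finV)
    define \<alpha> where "\<alpha> = - p' w1 $ 2 * u w1 $ 1 + p' w1 $ 1 * u w1 $ 2"
    define t where "t = u w1 $ 3"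
    define u' where "u' = (\<lambda>x. u x - Tm \<alpha> t (p' x))"
    have fe: "\<And>x y. {x, y} \<in> E' \<Longrightarrow> inner (p' x - p' y) (u' x - u' y) = 0"
    proof -
      fix x y assume "{x, y} \<in> E'"
      then have "inner (p' x - p' y) (u x - u y) = 0" using fl by (simp add: inf_flex_def)
      moreover have "u' x - u' y = (u x - u y) - (Tm \<alpha> t (p' x) - Tm \<alpha> t (p' y))"
        by (simp add: u'_def)
      ultimately show "inner (p' x - p' y) (u' x - u' y) = 0"
        using Tm_edge[of "p' x" "p' y" \<alpha> t] by (simp add: inner_diff_right)
    qed
    have fn: "\<And>x. x \<in> V' \<Longrightarrow> inner (cyl_normal (p' x)) (u' x) = 0"
      using fl by (simp add: inf_flex_def u'_def inner_diff_right Tm_normal)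
    have w1V': "w1 \<in> V'" using KV' by auto
    have rA: "\<forall>\<rho>\<in>RA w1 ?K. rowval \<rho> (coords p') u' = 0"
    proof
      fix \<rho> assume "\<rho> \<in> RA w1 ?K"
      then consider (e) a b where "\<rho> = edgerow a b" "a \<in> ?K" "b \<in> ?K" "a \<noteq> b"
        | (n) a where "\<rho> = normrow a" "a \<in> ?K" | (p1) "\<rho> = pin1 w1" | (p2) "\<rho> = pin2 w1"
        unfolding RA_def by blast
      then show "rowval \<rho> (coords p') u' = 0"
      proof cases
        case e
        have "{a, b} \<in> {{a, b} | a b. a \<in> ?K \<and> b \<in> ?K \<and> a \<noteq> b}" using e(2-4) by blast
        then have "{a, b} \<in> E'" unfolding E'eq by (rule UnI2)
        then show ?thesis using e(1) fe by (simp add: rowval_edgerow)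
      next
        case n then show ?thesis using fn KV' by (auto simp: rowval_normrow)
      next
        case p1 then show ?thesis by (simp add: rowval_pin1 u'_def t_def Tm_def)
      next
        case p2
        have "(p' w1 $ 1)\<^sup>2 + (p' w1 $ 2)\<^sup>2 = 1" using onp'[OF w1V'] by (simp add: on_cyl_def)
        from pin2_alg[OF this \<alpha>_def]
        have "- p' w1 $ 2 * (u w1 $ 1 - - \<alpha> * p' w1 $ 2) + p' w1 $ 1 * (u w1 $ 2 - \<alpha> * p' w1 $ 1) = 0" .
        then show ?thesis using p2 by (simp add: rowval_pin2 u'_def Tm_def coords_def)
      qed
    qed
    have uK: "\<forall>w\<in>?K. u' w = 0" using kA rA by blast
    have rB: "\<forall>\<rho>\<in>RB. rowval \<rho> (coords p') u' = 0"
    proof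
      fix \<rho> assume "\<rho> \<in> RB"
      then consider (e) x y where "\<rho> = edgerow x y" "{x, y} \<in> E" "x \<noteq> v" "y \<noteq> v"
        | (n) a where "\<rho> = normrow a" "a \<in> ?W" | (nb) x where "\<rho> = nbrow x (c x)" "{x, v} \<in> E"
        unfolding RB_def by blast
      then show "rowval \<rho> (coords p') u' = 0"
      proof cases
        case e
        have "{x, y} \<in> {e \<in> E. v \<notin> e}" using e(2-4) by simp
        then have "{x, y} \<in> E'" unfolding E'eq by (intro UnI1)
        then show ?thesis using e(1) fe by (simp add: rowval_edgerow)
      next
        case n then show ?thesis using fn WV' by (auto simp: rowval_normrow)
      next
        case nb
        have "{x, c x} \<in> {{x, c x} | x. {x, v} \<in> E}" using nb(2) by blast
        then have "{x, c x} \<in> E'" unfolding E'eq by (intro UnI1 UnI2)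
        moreover have "c x \<in> ?K" using cK nb(2) by blast
        then have "u' (c x) = 0" using uK by blast
        ultimately show ?thesis using nb fe[of x "c x"] by (simp add: rowval_nbrow)
      qed
    qed
    have uW: "\<forall>w\<in>?W. u' w = 0" using kB rB by blast
    obtain A b where tg: "tangential_inf_isometry A b" and Ab: "\<forall>y. A *v y + b = Tm \<alpha> t y"
      using Tm_rigid by blast
    show "rigid_motion_flex V' p' u"
      unfolding rigid_motion_flex_def
    proof (intro exI conjI ballI)
      show "tangential_inf_isometry A b" by (rule tg)
      fix x assume "x \<in> V'"
      then have "u' x = 0" using uK uW V'eq by auto
      then show "u x = A *v p' x + b" using Ab by (simp add: u'_def)
    qed
  qed
qed

end
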